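(* Let $X_0, X_1, \dots$ be positive, independent, identically distributed random variables with $E X_i = \mu_X > 0$. Let $L_1, L_2, \dots$ be positive, independent, identically distributed random variables with $E L_i = \mu_L < \infty$. Let $l_0$ be a positive constant. Then $$\frac{X_0}{l_0} + \frac{X_1}{l_0 + L_1} + \frac{X_2}{l_0 + L_1 + L_2} + \dots = \infty$$ almost surely. *)

theory Defs
  imports "HOL-Probability.Probability"
begin

end

theory Submission
  imports Defs
begin

lemma det_not_summable:
  fixes X Y S :: "nat \<Rightarrow> real" and l0 m K :: real
  assumes Y0: "\<And>n. 0 \<le> Y n" and YX: "\<And>n. Y n \<le> X n" and l0: "l0 > 0"
    and S0: "\<And>n. 0 \<le> S n" and Smono: "\<And>i j. i \<le> j \<Longrightarrow> S i \<le> S j"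
    and m: "m > 0" and K: "K > 0"
    and ev: "eventually (\<lambda>N. (\<Sum>i\<in>{Suc N..<2 * Suc N}. Y i) > real (Suc N) * m / 2) sequentially"
    and fr: "\<And>M. \<exists>N\<ge>M. S (2 * Suc N) \<le> K * real (2 * Suc N)"
  shows "\<not> summable (\<lambda>n. X n / (l0 + S n))"
proof
  assume sm: "summable (\<lambda>n. X n / (l0 + S n))"
  define e where "e = m / (2 * (l0 + 2 * K))"
  have e: "e > 0" using m K l0 by (simp add: e_def)
  obtain N1 where N1: "\<And>p q. p \<ge> N1 \<Longrightarrow> norm (\<Sum>i\<in>{p..<q}. X i / (l0 + S i)) < e"
    using sm e unfolding summable_Cauchy by metis
  obtain N0 where N0: "\<And>N. N \<ge> N0 \<Longrightarrow> (\<Sum>i\<in>{Suc N..<2 * Suc N}. Y i) > real (Suc N) * m / 2"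
    using ev unfolding eventually_sequentially by metis
  obtain N where N: "N \<ge> max N0 N1" "S (2 * Suc N) \<le> K * real (2 * Suc N)" using fr by blast
  define p where "p = Suc N"
  define D where "D = l0 + K * real (2 * p)"
  have D: "D > 0" using l0 K unfolding D_def by (intro add_pos_nonneg) auto
  have "(\<Sum>i\<in>{p..<2*p}. Y i) / D = (\<Sum>i\<in>{p..<2*p}. Y i / D)" by (simp add: sum_divide_distrib)
  also have "\<dots> \<le> (\<Sum>i\<in>{p..<2*p}. X i / (l0 + S i))"
  proof (rule sum_mono)
    fix i assume i: "i \<in> {p..<2*p}"
    have "S i \<le> S (2 * p)" using i by (intro Smono) auto
    hence "l0 + S i \<le> D" using N(2) by (simp add: D_def p_def)
    moreover have "l0 + S i > 0" using l0 S0[of i] by linarith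
    ultimately have "Y i / D \<le> Y i / (l0 + S i)" using Y0[of i] by (intro divide_left_mono) auto
    also have "\<dots> \<le> X i / (l0 + S i)" using YX[of i] \<open>l0 + S i > 0\<close> by (intro divide_right_mono) auto
    finally show "Y i / D \<le> X i / (l0 + S i)" .
  qed
  also have "\<dots> < e" using N1[of p "2*p"] N by (auto simp: p_def)
  finally have lt: "(\<Sum>i\<in>{p..<2*p}. Y i) / D < e" .
  have gt: "(\<Sum>i\<in>{p..<2*p}. Y i) > real p * m / 2" using N0[of N] N by (simp add: p_def)
  have "e \<le> (real p * m / 2) / D"
  proof -
    have p1: "real p \<ge> 1" by (simp add: p_def)
    have "l0 + K * real (2 * p) \<le> real p * (l0 + 2 * K)"
      using p1 l0 by (simp add: algebra_simps)
    hence "m / 2 * (l0 + K * real (2 * p)) \<le> m / 2 * (real p * (l0 + 2 * K))"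
      using m by (intro mult_left_mono) auto
    thus ?thesis using D l0 K m unfolding e_def D_def
      by (simp add: field_simps)
  qed
  also have "\<dots> < (\<Sum>i\<in>{p..<2*p}. Y i) / D" using gt D by (intro divide_strict_right_mono) auto
  finally show False using lt by simp
qed

theorem lemma2:
  fixes M :: "'a measure"
    and X :: "nat \<Rightarrow> 'a \<Rightarrow> real"
    and L :: "nat \<Rightarrow> 'a \<Rightarrow> real"
    and l0 :: real
  assumes "prob_space M"
    and X_rv: "\<And>i. X i \<in> borel_measurable M"
    and X_pos: "\<And>i x. x \<in> space M \<Longrightarrow> X i x > 0"
    and X_indep: "prob_space.indep_vars M (\<lambda>_. borel) X UNIV"
    and X_id: "\<And>i. distr M borel (X i) = distr M borel (X 0)"
    and X_mean: "(\<integral>\<^sup>+ x. ennreal (X 0 x) \<partial>M) > 0"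
    and L_rv: "\<And>i. i \<ge> 1 \<Longrightarrow> L i \<in> borel_measurable M"
    and L_pos: "\<And>i x. i \<ge> 1 \<Longrightarrow> x \<in> space M \<Longrightarrow> L i x > 0"
    and L_indep: "prob_space.indep_vars M (\<lambda>_. borel) L {1..}"
    and L_id: "\<And>i. i \<ge> 1 \<Longrightarrow> distr M borel (L i) = distr M borel (L 1)"
    and L_mean: "integrable M (L 1)"
    and l0_pos: "l0 > 0"
  shows "AE \<omega> in M. (\<Sum>n. ennreal (X n \<omega> / (l0 + (\<Sum>k\<in>{1..n}. L k \<omega>)))) = \<infinity>"
proof -
  interpret P: prob_space M by fact
  define Y where "Y = (\<lambda>n x. min (X n x) (1::real))"
  have Y_rv[measurable]: "\<And>n. Y n \<in> borel_measurable M"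
    unfolding Y_def by (intro borel_measurable_min X_rv) auto
  have Y_pos: "\<And>n x. x \<in> space M \<Longrightarrow> 0 < Y n x" using X_pos by (simp add: Y_def)
  have Y_le1: "\<And>n x. Y n x \<le> 1" by (simp add: Y_def)
  have Y_leX: "\<And>n x. Y n x \<le> X n x" by (simp add: Y_def)
  define m where "m = P.expectation (Y 0)"
  have Y_int: "integrable M (Y 0)"
    by (rule P.integrable_const_bound[where B=1]) (auto intro!: AE_I2 simp: Y_le1 less_imp_le Y_pos abs_le_iff)
  have m_pos: "m > 0"
  proof -
    have "m \<ge> 0" unfolding m_def by (intro integral_nonneg_AE AE_I2) (auto simp: less_imp_le Y_pos)
    moreover have "m \<noteq> 0"
    proof
      assume "m = 0"
      then have "AE x in M. Y 0 x = 0"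
        using integral_nonneg_eq_0_iff_AE[OF Y_int] Y_pos by (auto simp: m_def less_imp_le intro!: AE_I2)
      moreover have "AE x in M. Y 0 x > 0" by (rule AE_I2) (rule Y_pos)
      ultimately have "AE x in M. False" by eventually_elim auto
      thus False using P.AE_False by simp
    qed
    ultimately show ?thesis by simp
  qed
  have Y_indep: "P.indep_vars (\<lambda>_. borel) Y UNIV"
    unfolding Y_def by (rule P.indep_vars_compose2[OF X_indep, where Y="\<lambda>i x. min x 1"]) auto
  have Y_distr: "distr M borel (Y n) = distr M borel (Y 0)" for n
  proof -
    have "distr M borel (Y n) = distr (distr M borel (X n)) borel (\<lambda>x. min x 1)" for n
      by (subst distr_distr) (auto simp: Y_def comp_def X_rv)
    thus ?thesis using X_id[of n] by simp
  qed
  define r where "r = exp (-(m^2/2))"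
  have r: "0 \<le> r" "r < 1" using m_pos by (auto simp: r_def)
  define B where "B N = {x\<in>space M. (\<Sum>i\<in>{Suc N..<2*Suc N}. Y i x) \<le> real (Suc N) * m / 2}" for N
  have B_meas[measurable]: "B N \<in> sets M" for N unfolding B_def by measurable
  have B_bound: "measure M (B N) \<le> r ^ Suc N" for N
  proof -
    have H: "Hoeffding_ineq_iid M {Suc N..<2*Suc N} Y (Y 0) 0 1"
      unfolding Hoeffding_ineq_iid_def iid_interval_bounded_random_variables_def
        iid_interval_bounded_random_variables_axioms_def
    proof (intro conjI allI impI)
      show "prob_space M" by fact
      show "finite {Suc N..<2*Suc N}" by simp
      show "P.indep_vars (\<lambda>_. borel) Y {Suc N..<2*Suc N}"
        by (rule P.indep_vars_subset[OF Y_indep]) auto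
      show "distr M borel (Y i) = distr M borel (Y 0)" for i by (rule Y_distr)
      show "Y 0 \<in> borel_measurable M" by simp
      show "AE x in M. Y 0 x \<in> {0..1}" using Y_pos Y_le1 by (intro AE_I2) (auto simp: less_imp_le)
    qed
    have eq: "B N = {x\<in>space M. (\<Sum>i\<in>{Suc N..<2*Suc N}. Y i x)
        \<le> real (card {Suc N..<2*Suc N}) * P.expectation (Y 0) - real (Suc N) * m / 2}"
    proof -
      have c: "real (card {Suc N..<2*Suc N}) = real (Suc N)" by simp
      have ar: "real (Suc N) * P.expectation (Y 0) - real (Suc N) * m / 2 = real (Suc N) * m / 2"
        by (simp add: m_def field_simps)
      show ?thesis by (simp only: B_def c ar)
    qed
    have "measure M (B N) \<le> exp (- 2 * (real (Suc N) * m / 2)\<^sup>2 / (real (card {Suc N..<2*Suc N}) * (1 - 0)\<^sup>2))"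
      unfolding eq using m_pos by (intro Hoeffding_ineq_iid.Hoeffding_ineq_le[OF H]) auto
    also have "\<dots> = exp (real (Suc N) * (-(m^2/2)))"
    proof -
      have c: "real (card {Suc N..<2*Suc N}) = real (Suc N)" by simp
      have "- 2 * (real (Suc N) * m / 2)\<^sup>2 / (real (Suc N) * (1 - 0)\<^sup>2) = real (Suc N) * (-(m^2/2))"
        by (simp add: power2_eq_square divide_simps) 
      thus ?thesis unfolding c by simp
    qed
    also have "\<dots> = r ^ Suc N" unfolding r_def by (rule exp_of_nat_mult)
    finally show ?thesis .
  qed
  have "summable (\<lambda>N. r ^ Suc N)"
    using summable_geometric[of r] r by (subst summable_Suc_iff) auto
  hence B_sum: "summable (\<lambda>N. measure M (B N))"
  proof (rule summable_comparison_test[rotated])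
    show "\<exists>N. \<forall>n\<ge>N. norm (measure M (B n)) \<le> r ^ Suc n"
      using B_bound by (intro exI[of _ 0]) auto
  qed
  have AE_Y: "AE x in M. eventually (\<lambda>N. x \<in> space M - B N) sequentially"
    by (rule borel_cantelli_AE1[OF B_meas _ B_sum]) (simp add: P.emeasure_eq_measure)
  define S where "S n x = (\<Sum>k\<in>{1..n}. L k x)" for n x
  have S_rv[measurable]: "S n \<in> borel_measurable M" for n
    unfolding S_def by (intro borel_measurable_sum L_rv) auto
  define \<mu> where "\<mu> = P.expectation (L 1)"
  have L_int: "integrable M (L k)" if "k \<ge> 1" for k
  proof -
    have "integrable M (L k) = integrable (distr M borel (L k)) (\<lambda>x. x)"
      by (subst integrable_distr_eq) (auto simp: L_rv[OF that])
    also have "\<dots> = integrable (distr M borel (L 1)) (\<lambda>x. x)" using L_id[OF that] by simp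
    also have "\<dots> = integrable M (L 1)"
      by (subst integrable_distr_eq) (use L_rv[of 1] in auto)
    finally show ?thesis using L_mean by simp
  qed
  have L_exp: "P.expectation (L k) = \<mu>" if "k \<ge> 1" for k
  proof -
    have "P.expectation (L k) = integral\<^sup>L (distr M borel (L k)) (\<lambda>x. x)"
      by (subst integral_distr) (auto simp: L_rv[OF that])
    also have "\<dots> = integral\<^sup>L (distr M borel (L 1)) (\<lambda>x. x)" using L_id[OF that] by simp
    also have "\<dots> = P.expectation (L 1)"
      by (subst integral_distr) (use L_rv[of 1] in auto)
    finally show ?thesis by (simp add: \<mu>_def)
  qed
  have S_int: "integrable M (S n)" for n
    unfolding S_def by (rule Bochner_Integration.integrable_sum) (auto intro: L_int)
  have S_exp: "P.expectation (S n) = real n * \<mu>" for n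
  proof -
    have "P.expectation (S n) = (\<Sum>k\<in>{1..n}. P.expectation (L k))"
      unfolding S_def by (rule Bochner_Integration.integral_sum) (auto intro: L_int)
    also have "\<dots> = (\<Sum>k\<in>{1..n}. \<mu>)" by (rule sum.cong) (auto simp: L_exp)
    finally show ?thesis by simp
  qed
  have S_nonneg: "0 \<le> S n x" if "x \<in> space M" for n x
    unfolding S_def using L_pos[OF _ that] by (intro sum_nonneg) (auto simp: less_imp_le)
  define A where "A K N = {x\<in>space M. S (2*Suc N) x \<le> K * real (2*Suc N)}" for K N
  have A_meas[measurable]: "A K N \<in> sets M" for K N unfolding A_def by measurable
  have A_prob: "P.prob (A K N) \<ge> 1 - \<mu> / K" if K: "K > 0" for K N
  proof -
    define c where "c = K * real (2*Suc N)"
    have c: "c > 0" using K by (simp add: c_def)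
    have "P.prob (space M - A K N) \<le> P.prob {x\<in>space M. S (2*Suc N) x \<ge> c}"
      by (intro P.finite_measure_mono) (auto simp: A_def c_def)
    also have "\<dots> \<le> P.expectation (S (2*Suc N)) / c"
      by (intro integral_Markov_inequality_measure[OF S_int _ _ c] AE_I2 S_nonneg) auto
    also have "\<dots> = \<mu> / K" unfolding S_exp c_def
      by (subst mult.commute[of K]) (rule mult_divide_mult_cancel_left, simp)
    finally show ?thesis using P.prob_compl[OF A_meas[of K N]] by simp
  qed
  define D where "D K M' = (\<Union>N\<in>{M'..}. A K N)" for K M'
  define G where "G K = (\<Inter>M'. D K M')" for K
  have D_meas[measurable]: "D K M' \<in> sets M" for K M' unfolding D_def by measurable
  have G_meas[measurable]: "G K \<in> sets M" for K unfolding G_def by measurable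
  have G_prob: "P.prob (G K) \<ge> 1 - \<mu> / K" if K: "K > 0" for K
  proof -
    have "(\<lambda>M'. P.prob (D K M')) \<longlonglongrightarrow> P.prob (\<Inter> (range (D K)))"
      by (rule P.finite_Lim_measure_decseq) (auto simp: D_def antimono_def intro: order_trans)
    moreover have "\<forall>n\<ge>0. 1 - \<mu> / K \<le> P.prob (D K n)"
    proof (intro allI impI)
      fix n :: nat
      have "P.prob (A K n) \<le> P.prob (D K n)" by (intro P.finite_measure_mono) (auto simp: D_def)
      thus "1 - \<mu> / K \<le> P.prob (D K n)" using A_prob[OF K, of n] by simp
    qed
    ultimately show ?thesis unfolding G_def by (intro LIMSEQ_le_const) auto
  qed
  define E where "E = (\<Union>j. G (real (Suc j)))"
  have E_meas[measurable]: "E \<in> sets M" unfolding E_def by measurable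
  have "1 \<le> P.prob E"
  proof (rule LIMSEQ_le_const2)
    show "(\<lambda>j. 1 - \<mu> * inverse (real (Suc j))) \<longlonglongrightarrow> 1"
      using tendsto_diff[OF tendsto_const tendsto_mult_right_zero[OF LIMSEQ_inverse_real_of_nat, of \<mu>], of 1]
      by simp
    show "\<exists>N. \<forall>n\<ge>N. 1 - \<mu> * inverse (real (Suc n)) \<le> P.prob E"
    proof (intro exI allI impI)
      fix n :: nat
      have "P.prob (G (real (Suc n))) \<le> P.prob E" by (intro P.finite_measure_mono) (auto simp: E_def)
      moreover have "1 - \<mu> / real (Suc n) \<le> P.prob (G (real (Suc n)))"
        by (rule G_prob) simp
      ultimately show "1 - \<mu> * inverse (real (Suc n)) \<le> P.prob E"
        unfolding divide_inverse by linarith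
    qed
  qed
  hence "P.prob E = 1" using P.prob_le_1[of E] by simp
  hence AE_E: "AE x in M. x \<in> E" by (rule P.AE_prob_1)
  show ?thesis
    using AE_Y AE_E AE_space
  proof eventually_elim
    case (elim x)
    from elim(2) obtain j where j: "x \<in> G (real (Suc j))" by (auto simp: E_def)
    define K where "K = real (Suc j)"
    have K: "K > 0" by (simp add: K_def)
    have fr: "\<exists>N\<ge>M'. S (2*Suc N) x \<le> K * real (2*Suc N)" for M'
      using j unfolding G_def D_def A_def K_def by auto
    have ev: "eventually (\<lambda>N. (\<Sum>i\<in>{Suc N..<2*Suc N}. Y i x) > real (Suc N) * m / 2) sequentially"
      using elim(1) by (rule eventually_mono) (auto simp: B_def elim(3))
    have Y0: "0 \<le> Y n x" for n using Y_pos[OF elim(3), of n] by simp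
    have S0: "0 \<le> S n x" for n by (rule S_nonneg[OF elim(3)])
    have Smono: "S i x \<le> S i' x" if "i \<le> i'" for i i'
      unfolding S_def using that L_pos[OF _ elim(3)]
      by (intro sum_mono2) (auto simp: less_imp_le)
    have ns: "\<not> summable (\<lambda>n. X n x / (l0 + S n x))"
      by (rule det_not_summable[OF Y0 Y_leX l0_pos S0 Smono m_pos K ev fr])
    have nn: "0 \<le> X n x / (l0 + S n x)" for n
      using X_pos[OF elim(3), of n] S0[of n] l0_pos by (intro divide_nonneg_pos) auto
    have "(\<Sum>n. ennreal (X n x / (l0 + S n x))) = top"
      by (rule summable_iff_suminf_neq_top[OF nn ns])
    thus ?case by (simp add: S_def)
  qed
qed
end
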